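(* Let $A\in\mathbb{R}^{m\times m}$ be positive definite, let $B\in\mathbb{R}^{m\times n}$ ($n\le m$) be rank deficient, and let $\alpha\ge0$, $\beta>0$. Then the pseudo-spectral radius of the MGSSP iteration matrix satisfies $\gamma(\mathcal{T}(\alpha,\beta))<1$.
   Context: A real square matrix $A$ is called positive definite if $x^TAx>0$ for all nonzero $x\in\mathbb{R}^m$ ($A$ need not be symmetric). For $\alpha\ge0,\beta>0$ define $\mathcal{P}_{MGSSP}=\begin{pmatrix}\alpha I+2A & 2B\\ -2B^T & \beta I\end{pmatrix}$, $\mathcal{Q}_{MGSSP}=\begin{pmatrix}\alpha I+A & B\\ -B^T & \beta I\end{pmatrix}$, and the MGSSP iteration matrix $\mathcal{T}(\alpha,\beta)=\mathcal{P}_{MGSSP}^{-1}\mathcal{Q}_{MGSSP}$. For a square matrix $T$ with spectrum $\sigma(T)$, the pseudo-spectral radius is $\gamma(T)=\max\{|\lambda|:\lambda\in\sigma(T),\ \lambda\neq1\}$ (taken as $0$ if $\sigma(T)=\{1\}$). *)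

theory Defs
  imports "Jordan_Normal_Form.Spectral_Radius" "Jordan_Normal_Form.DL_Rank"
    "Jordan_Normal_Form.Gauss_Jordan_Elimination"
begin

definition pos_def_mat :: "nat \<Rightarrow> real mat \<Rightarrow> bool" where
  "pos_def_mat m A \<longleftrightarrow> A \<in> carrier_mat m m \<and>
     (\<forall>x \<in> carrier_vec m. x \<noteq> 0\<^sub>v m \<longrightarrow> x \<bullet> (A *\<^sub>v x) > 0)"

definition P_MGSSP :: "real \<Rightarrow> real \<Rightarrow> real mat \<Rightarrow> real mat \<Rightarrow> real mat" where
  "P_MGSSP \<alpha> \<beta> A B = four_block_mat
     (\<alpha> \<cdot>\<^sub>m 1\<^sub>m (dim_row A) + 2 \<cdot>\<^sub>m A)   (2 \<cdot>\<^sub>m B)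
     (- (2 \<cdot>\<^sub>m transpose_mat B))          (\<beta> \<cdot>\<^sub>m 1\<^sub>m (dim_col B))"

definition Q_MGSSP :: "real \<Rightarrow> real \<Rightarrow> real mat \<Rightarrow> real mat \<Rightarrow> real mat" where
  "Q_MGSSP \<alpha> \<beta> A B = four_block_mat
     (\<alpha> \<cdot>\<^sub>m 1\<^sub>m (dim_row A) + A)   B
     (- transpose_mat B)            (\<beta> \<cdot>\<^sub>m 1\<^sub>m (dim_col B))"

definition T_MGSSP :: "real \<Rightarrow> real \<Rightarrow> real mat \<Rightarrow> real mat \<Rightarrow> real mat" where
  "T_MGSSP \<alpha> \<beta> A B = the (mat_inverse (P_MGSSP \<alpha> \<beta> A B)) * Q_MGSSP \<alpha> \<beta> A B"

definition pseudo_spectral_radius :: "real mat \<Rightarrow> real" where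
  "pseudo_spectral_radius T =
     Sup ({0} \<union> cmod ` (spectrum (map_mat complex_of_real T) - {1}))"

end

theory Submission
  imports Defs
begin

definition qf :: "nat \<Rightarrow> complex vec \<Rightarrow> (nat \<Rightarrow> nat \<Rightarrow> real) \<Rightarrow> complex" where
  "qf N x f = (\<Sum>i<N. \<Sum>j<N. cnj (x$i) * of_real (f i j) * x$j)"

definition Dm :: "nat \<Rightarrow> real \<Rightarrow> real \<Rightarrow> nat \<Rightarrow> nat \<Rightarrow> real" where
  "Dm m a b i j = (if i = j then (if i < m then a else b) else 0)"
definition KA :: "nat \<Rightarrow> real mat \<Rightarrow> nat \<Rightarrow> nat \<Rightarrow> real" where
  "KA m A i j = (if i < m \<and> j < m then A$$(i,j) else 0)"
definition KB :: "nat \<Rightarrow> real mat \<Rightarrow> nat \<Rightarrow> nat \<Rightarrow> real" where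
  "KB m B i j = (if i < m \<and> m \<le> j then B$$(i,j-m) else if m \<le> i \<and> j < m then - B$$(j,i-m) else 0)"

lemma qf_neg: "qf N x (\<lambda>i j. - f i j) = - qf N x f"
  unfolding qf_def by (simp add: sum_negf)

lemma qf_cnj: "cnj (qf N x f) = qf N x (\<lambda>i j. f j i)"
proof -
  have "cnj (qf N x f) = (\<Sum>i<N. \<Sum>j<N. x$i * of_real (f i j) * cnj (x$j))"
    unfolding qf_def by (simp add: cnj_sum)
  also have "\<dots> = (\<Sum>j<N. \<Sum>i<N. x$i * of_real (f i j) * cnj (x$j))"
    by (rule sum.swap)
  also have "\<dots> = qf N x (\<lambda>i j. f j i)"
    unfolding qf_def by (intro sum.cong refl) (simp add: mult_ac)
  finally show ?thesis .
qed

lemma qf_KB_re: "Re (qf N x (KB m B)) = 0"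
proof -
  have "(\<lambda>i j. KB m B j i) = (\<lambda>i j. - KB m B i j)"
    by (auto simp: KB_def fun_eq_iff)
  hence "cnj (qf N x (KB m B)) = - qf N x (KB m B)" by (simp add: qf_cnj qf_neg)
  hence "Re (cnj (qf N x (KB m B))) = Re (- qf N x (KB m B))" by simp
  thus ?thesis by simp
qed

lemma cnj_mult_norm: "cnj z * of_real c * z = of_real (c * (cmod z)^2)"
proof -
  have "of_real ((cmod z)^2) = z * cnj z" by (rule complex_norm_square)
  thus ?thesis by (metis mult.commute mult.left_commute of_real_mult)
qed

lemma qf_D: "qf N x (Dm m a b) = of_real (\<Sum>i<N. (if i < m then a else b) * (cmod (x$i))^2)"
proof -
  have "qf N x (Dm m a b) = (\<Sum>i<N. cnj (x$i) * of_real (if i < m then a else b) * x$i)"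
  proof -
    have "\<And>i. i < N \<Longrightarrow> (\<Sum>j<N. cnj (x$i) * of_real (Dm m a b i j) * x$j) = cnj (x$i) * of_real (if i < m then a else b) * x$i"
    proof -
      fix i assume i: "i < N"
      have "(\<Sum>j<N. cnj (x$i) * of_real (Dm m a b i j) * x$j) = (\<Sum>j<N. if i = j then cnj (x$i) * of_real (if i < m then a else b) * x$i else 0)"
        by (intro sum.cong refl, auto simp: Dm_def)
      also have "\<dots> = cnj (x$i) * of_real (if i < m then a else b) * x$i" using i by (simp add: sum.delta)
      finally show "?thesis i" .
    qed
    thus ?thesis unfolding qf_def by (intro sum.cong refl) auto
  qed
  also have "\<dots> = (\<Sum>i<N. of_real ((if i < m then a else b) * (cmod (x$i))^2))"
    by (intro sum.cong refl, rule cnj_mult_norm)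
  finally show ?thesis by simp
qed

lemma qf_zero_first:
  assumes "\<forall>i<m. x$i = 0"
  shows "qf N x (KA m A) = 0" "qf N x (KB m B) = 0"
  unfolding qf_def KA_def KB_def using assms by (auto intro!: sum.neutral)

lemma sum_restrict_less: assumes "m \<le> (N::nat)" shows "(\<Sum>i<N. if i < m then f i else (0::'a::comm_monoid_add)) = (\<Sum>i<m. f i)"
proof -
  have "(\<Sum>i<N. if i<m then f i else 0) = sum f {i \<in> {..<N}. i < m}" by (rule sum.inter_filter[symmetric]) simp
  also have "{i \<in> {..<N}. i < m} = {..<m}" using assms by auto
  finally show ?thesis .
qed

lemma pt: "Re (cnj a * of_real c * b) = c * (Re a * Re b + Im a * Im b)"
  by (simp add: algebra_simps)
lemma quad: fixes f :: "nat \<Rightarrow> real" assumes "A \<in> carrier_mat m m"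
  shows "vec m f \<bullet> (A *\<^sub>v vec m f) = (\<Sum>i<m. \<Sum>j<m. A$$(i,j) * (f i * f j))"
  unfolding scalar_prod_def using assms
  by (auto simp: scalar_prod_def lessThan_atLeast0 sum_distrib_left mult_ac intro!: sum.cong)
lemma comb: "(\<Sum>i<m. \<Sum>j<m. (A$$(i,j)::real) * (f i * f j + g i * g j)) =
   (\<Sum>i<m. \<Sum>j<m. A$$(i,j) * (f i * f j)) + (\<Sum>i<m. \<Sum>j<m. A$$(i,j) * (g i * g j))"
  by (simp add: distrib_left sum.distrib)

lemma qf_KA_re:
  assumes "A \<in> carrier_mat m m" "m \<le> N"
  shows "Re (qf N x (KA m A)) = vec m (\<lambda>i. Re (x$i)) \<bullet> (A *\<^sub>v vec m (\<lambda>i. Re (x$i)))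
         + vec m (\<lambda>i. Im (x$i)) \<bullet> (A *\<^sub>v vec m (\<lambda>i. Im (x$i)))"
proof -
  have "qf N x (KA m A) = (\<Sum>i<m. \<Sum>j<m. cnj (x$i) * of_real (A$$(i,j)) * x$j)"
  proof -
    have "qf N x (KA m A) = (\<Sum>i<N. if i < m then (\<Sum>j<N. if j < m then cnj (x$i) * of_real (A$$(i,j)) * x$j else 0) else 0)"
      unfolding qf_def KA_def by (auto intro!: sum.cong)
    also have "\<dots> = (\<Sum>i<N. if i < m then (\<Sum>j<m. cnj (x$i) * of_real (A$$(i,j)) * x$j) else 0)"
      using assms(2) by (simp add: sum_restrict_less)
    also have "\<dots> = (\<Sum>i<m. \<Sum>j<m. cnj (x$i) * of_real (A$$(i,j)) * x$j)"
      using assms(2) by (simp add: sum_restrict_less)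
    finally show ?thesis .
  qed
  hence "Re (qf N x (KA m A)) = (\<Sum>i<m. \<Sum>j<m. A$$(i,j) * (Re (x$i) * Re (x$j) + Im (x$i) * Im (x$j)))"
    by (simp only: Re_sum pt)
  also have "\<dots> = (\<Sum>i<m. \<Sum>j<m. A$$(i,j) * (Re (x$i) * Re (x$j))) + (\<Sum>i<m. \<Sum>j<m. A$$(i,j) * (Im (x$i) * Im (x$j)))"
    by (rule comb)
  also have "\<dots> = vec m (\<lambda>i. Re (x$i)) \<bullet> (A *\<^sub>v vec m (\<lambda>i. Re (x$i)))
         + vec m (\<lambda>i. Im (x$i)) \<bullet> (A *\<^sub>v vec m (\<lambda>i. Im (x$i)))"
    by (simp only: quad[OF assms(1)])
  finally show ?thesis .
qed


lemma qf_cong: "(\<And>i j. i < N \<Longrightarrow> j < N \<Longrightarrow> f i j = g i j) \<Longrightarrow> qf N x f = qf N x g"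
  unfolding qf_def by (intro sum.cong refl) auto

lemma qf_lin: "qf N x (\<lambda>i j. f i j + c * g i j + c * h i j) = qf N x f + of_real c * qf N x g + of_real c * qf N x h"
  unfolding qf_def by (simp add: sum.distrib sum_distrib_left algebra_simps)

lemma qf_mat:
  assumes "M \<in> carrier_mat N N" "x \<in> carrier_vec N"
  shows "(\<Sum>i<N. cnj (x$i) * (map_mat of_real M *\<^sub>v x)$i) = qf N x (\<lambda>i j. M$$(i,j))"
  unfolding qf_def using assms
  by (auto simp: scalar_prod_def sum_distrib_left mult.assoc intro!: sum.cong)

lemma P_carrier: "A \<in> carrier_mat m m \<Longrightarrow> B \<in> carrier_mat m n \<Longrightarrow> P_MGSSP \<alpha> \<beta> A B \<in> carrier_mat (m+n) (m+n)"
  unfolding P_MGSSP_def by auto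
lemma Q_carrier: "A \<in> carrier_mat m m \<Longrightarrow> B \<in> carrier_mat m n \<Longrightarrow> Q_MGSSP \<alpha> \<beta> A B \<in> carrier_mat (m+n) (m+n)"
  unfolding Q_MGSSP_def by auto

lemma P_entry: assumes "A \<in> carrier_mat m m" "B \<in> carrier_mat m n" "i < m+n" "j < m+n"
  shows "P_MGSSP \<alpha> \<beta> A B $$ (i,j) = Dm m \<alpha> \<beta> i j + 2 * KA m A i j + 2 * KB m B i j"
  using assms unfolding P_MGSSP_def Dm_def KA_def KB_def by auto

lemma Q_entry: assumes "A \<in> carrier_mat m m" "B \<in> carrier_mat m n" "i < m+n" "j < m+n"
  shows "Q_MGSSP \<alpha> \<beta> A B $$ (i,j) = Dm m \<alpha> \<beta> i j + 1 * KA m A i j + 1 * KB m B i j"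
  using assms unfolding Q_MGSSP_def Dm_def KA_def KB_def by auto

lemma posdef_nonneg: assumes "pos_def_mat m A" "v \<in> carrier_vec m"
  shows "v \<bullet> (A *\<^sub>v v) \<ge> 0" "v \<bullet> (A *\<^sub>v v) = 0 \<Longrightarrow> v = 0\<^sub>v m"
proof -
  have A: "A \<in> carrier_mat m m" using assms(1) unfolding pos_def_mat_def by auto
  show "v \<bullet> (A *\<^sub>v v) \<ge> 0"
  proof (cases "v = 0\<^sub>v m")
    case True thus ?thesis using A by simp
  next
    case False thus ?thesis using assms unfolding pos_def_mat_def by (auto intro: less_imp_le)
  qed
  show "v \<bullet> (A *\<^sub>v v) = 0 \<Longrightarrow> v = 0\<^sub>v m" using assms unfolding pos_def_mat_def by force
qed

lemma key_facts:
  fixes x :: "complex vec"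
  assumes A: "A \<in> carrier_mat m m" and pd: "pos_def_mat m A" and ab: "\<alpha> \<ge> 0" "\<beta> > 0"
    and x: "x \<in> carrier_vec (m+n)" "x \<noteq> 0\<^sub>v (m+n)"
  shows "Re (qf (m+n) x (Dm m \<alpha> \<beta>)) \<ge> 0" "Im (qf (m+n) x (Dm m \<alpha> \<beta>)) = 0"
    "Re (qf (m+n) x (KA m A)) \<ge> 0"
    "Re (qf (m+n) x (KA m A)) = 0 \<Longrightarrow> (\<forall>i<m. x$i = 0)"
    "(\<forall>i<m. x$i = 0) \<Longrightarrow> Re (qf (m+n) x (Dm m \<alpha> \<beta>)) > 0"
proof -
  let ?re = "vec m (\<lambda>i. Re (x$i))" and ?im = "vec m (\<lambda>i. Im (x$i))"
  have ka: "Re (qf (m+n) x (KA m A)) = ?re \<bullet> (A *\<^sub>v ?re) + ?im \<bullet> (A *\<^sub>v ?im)"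
    by (rule qf_KA_re[OF A], simp)
  have r1: "?re \<bullet> (A *\<^sub>v ?re) \<ge> 0" and r2: "?im \<bullet> (A *\<^sub>v ?im) \<ge> 0"
    by (rule posdef_nonneg(1)[OF pd], simp)+
  show "Re (qf (m+n) x (KA m A)) \<ge> 0" using ka r1 r2 by simp
  show "Re (qf (m+n) x (KA m A)) = 0 \<Longrightarrow> (\<forall>i<m. x$i = 0)"
  proof (intro allI impI)
    fix i assume h: "Re (qf (m+n) x (KA m A)) = 0" and i: "i < m"
    have s1: "?re \<bullet> (A *\<^sub>v ?re) = 0" using ka r1 r2 h by linarith
    have s2: "?im \<bullet> (A *\<^sub>v ?im) = 0" using ka r1 r2 h by linarith
    have re0: "?re = 0\<^sub>v m" by (rule posdef_nonneg(2)[OF pd _ s1]) simp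
    have im0: "?im = 0\<^sub>v m" by (rule posdef_nonneg(2)[OF pd _ s2]) simp
    have "Re (x$i) = ?re $ i" using i by simp
    also have "\<dots> = 0" unfolding re0 using i by simp
    finally have "Re (x$i) = 0" .
    moreover have "Im (x$i) = ?im $ i" using i by simp
    moreover have "?im $ i = 0" unfolding im0 using i by simp
    ultimately have "Re (x$i) = 0" "Im (x$i) = 0" by simp_all
    thus "x$i = 0" by (simp add: complex_eq_iff)
  qed
  have D: "qf (m+n) x (Dm m \<alpha> \<beta>) = of_real (\<Sum>i<m+n. (if i < m then \<alpha> else \<beta>) * (cmod (x$i))^2)"
    by (rule qf_D)
  have nn: "\<And>i. 0 \<le> (if i < m then \<alpha> else \<beta>) * (cmod (x$i))^2" using ab by auto
  show "Re (qf (m+n) x (Dm m \<alpha> \<beta>)) \<ge> 0" unfolding D using nn by (simp add: sum_nonneg)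
  show "Im (qf (m+n) x (Dm m \<alpha> \<beta>)) = 0" unfolding D by simp
  assume z: "\<forall>i<m. x$i = 0"
  obtain k where k: "k < m+n" "x$k \<noteq> 0"
  proof -
    { assume "\<forall>k<m+n. x$k = 0"
      hence "x = 0\<^sub>v (m+n)" using x(1) by (intro eq_vecI) auto
      with x(2) have False by simp }
    thus ?thesis using that by blast
  qed
  with z have km: "\<not> k < m" by auto
  have "0 < (\<Sum>i<m+n. (if i < m then \<alpha> else \<beta>) * (cmod (x$i))^2)"
    by (rule sum_pos2[of _ k], insert k km ab nn, auto)
  thus "Re (qf (m+n) x (Dm m \<alpha> \<beta>)) > 0" unfolding D by simp
qed


lemma qf_P: assumes A: "A \<in> carrier_mat m m" and B: "B \<in> carrier_mat m n" and x: "x \<in> carrier_vec (m+n)"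
  shows "(\<Sum>i<m+n. cnj (x$i) * (map_mat of_real (P_MGSSP \<alpha> \<beta> A B) *\<^sub>v x)$i)
     = qf (m+n) x (Dm m \<alpha> \<beta>) + 2 * qf (m+n) x (KA m A) + 2 * qf (m+n) x (KB m B)"
proof -
  have "(\<Sum>i<m+n. cnj (x$i) * (map_mat of_real (P_MGSSP \<alpha> \<beta> A B) *\<^sub>v x)$i)
     = qf (m+n) x (\<lambda>i j. P_MGSSP \<alpha> \<beta> A B $$ (i,j))" by (rule qf_mat[OF P_carrier[OF A B] x])
  also have "\<dots> = qf (m+n) x (\<lambda>i j. Dm m \<alpha> \<beta> i j + 2 * KA m A i j + 2 * KB m B i j)"
    by (rule qf_cong, rule P_entry[OF A B])
  also have "\<dots> = qf (m+n) x (Dm m \<alpha> \<beta>) + 2 * qf (m+n) x (KA m A) + 2 * qf (m+n) x (KB m B)"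
    by (simp add: qf_lin)
  finally show ?thesis .
qed

lemma qf_Q: assumes A: "A \<in> carrier_mat m m" and B: "B \<in> carrier_mat m n" and x: "x \<in> carrier_vec (m+n)"
  shows "(\<Sum>i<m+n. cnj (x$i) * (map_mat of_real (Q_MGSSP \<alpha> \<beta> A B) *\<^sub>v x)$i)
     = qf (m+n) x (Dm m \<alpha> \<beta>) + qf (m+n) x (KA m A) + qf (m+n) x (KB m B)"
proof -
  have "(\<Sum>i<m+n. cnj (x$i) * (map_mat of_real (Q_MGSSP \<alpha> \<beta> A B) *\<^sub>v x)$i)
     = qf (m+n) x (\<lambda>i j. Q_MGSSP \<alpha> \<beta> A B $$ (i,j))" by (rule qf_mat[OF Q_carrier[OF A B] x])
  also have "\<dots> = qf (m+n) x (\<lambda>i j. Dm m \<alpha> \<beta> i j + 1 * KA m A i j + 1 * KB m B i j)"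
    by (rule qf_cong, rule Q_entry[OF A B])
  also have "\<dots> = qf (m+n) x (Dm m \<alpha> \<beta>) + qf (m+n) x (KA m A) + qf (m+n) x (KB m B)"
    by (simp only: qf_lin) simp
  finally show ?thesis .
qed

lemma P_pos:
  assumes A: "A \<in> carrier_mat m m" and pd: "pos_def_mat m A" and ab: "\<alpha> \<ge> 0" "\<beta> > 0"
    and B: "B \<in> carrier_mat m n"
    and x: "x \<in> carrier_vec (m+n)" "x \<noteq> 0\<^sub>v (m+n)"
  shows "Re (\<Sum>i<m+n. cnj (x$i) * (map_mat of_real (P_MGSSP \<alpha> \<beta> A B) *\<^sub>v x)$i) > 0"
proof -
  note kf = key_facts[OF A pd ab x]
  have "Re (\<Sum>i<m+n. cnj (x$i) * (map_mat of_real (P_MGSSP \<alpha> \<beta> A B) *\<^sub>v x)$i)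
     = Re (qf (m+n) x (Dm m \<alpha> \<beta>)) + 2 * Re (qf (m+n) x (KA m A))"
    unfolding qf_P[OF A B x(1)] using qf_KB_re[of "m+n" x m B] by simp
  moreover have "Re (qf (m+n) x (Dm m \<alpha> \<beta>)) + 2 * Re (qf (m+n) x (KA m A)) > 0"
  proof (cases "Re (qf (m+n) x (KA m A)) = 0")
    case True thus ?thesis using kf by auto
  next
    case False thus ?thesis using kf(1,3) by linarith
  qed
  ultimately show ?thesis by simp
qed

lemma P_inverse:
  assumes A: "A \<in> carrier_mat m m" and pd: "pos_def_mat m A" and ab: "\<alpha> \<ge> 0" "\<beta> > 0"
    and B: "B \<in> carrier_mat m n"
  shows "\<exists>Pi. mat_inverse (P_MGSSP \<alpha> \<beta> A B) = Some Pi \<and> P_MGSSP \<alpha> \<beta> A B * Pi = 1\<^sub>m (m+n)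
     \<and> Pi \<in> carrier_mat (m+n) (m+n)"
proof -
  let ?P = "P_MGSSP \<alpha> \<beta> A B"
  have Pc: "?P \<in> carrier_mat (m+n) (m+n)" by (rule P_carrier[OF A B])
  have "det ?P \<noteq> 0"
  proof
    assume "det ?P = 0"
    then obtain v where v: "v \<in> carrier_vec (m+n)" "v \<noteq> 0\<^sub>v (m+n)" "?P *\<^sub>v v = 0\<^sub>v (m+n)"
      using det_0_iff_vec_prod_zero_field[OF Pc] by auto
    let ?x = "map_vec complex_of_real v"
    have x: "?x \<in> carrier_vec (m+n)" "?x \<noteq> 0\<^sub>v (m+n)" using v by auto
    have "map_mat complex_of_real ?P *\<^sub>v ?x = map_vec complex_of_real (?P *\<^sub>v v)"
      by (rule of_real_hom.mult_mat_vec_hom[OF Pc v(1), symmetric])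
    also have "\<dots> = 0\<^sub>v (m+n)" using v(3) by simp
    finally have "(\<Sum>i<m+n. cnj (?x$i) * (map_mat of_real ?P *\<^sub>v ?x)$i) = 0" by simp
    with P_pos[OF A pd ab B x] show False by simp
  qed
  hence U: "?P \<in> Units (ring_mat TYPE(real) (m+n) ())" by (rule det_non_zero_imp_unit[OF Pc])
  obtain Pi where "mat_inverse ?P = Some Pi"
    using mat_inverse(1)[OF Pc, of "()"] U by (cases "mat_inverse ?P") auto
  with mat_inverse(2)[OF Pc this] show ?thesis by auto
qed

theorem lemma4p3:
  fixes A B :: "real mat" and m n :: nat and \<alpha> \<beta> :: real
  assumes "A \<in> carrier_mat m m" and "pos_def_mat m A"
    and "B \<in> carrier_mat m n" and "n \<le> m"
    and "vec_space.rank m B < n"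
    and "\<alpha> \<ge> 0" and "\<beta> > 0"
  shows "pseudo_spectral_radius (T_MGSSP \<alpha> \<beta> A B) < 1"
proof -
  note A = assms(1) and pd = assms(2) and B = assms(3) and ab = assms(6,7)
  let ?P = "P_MGSSP \<alpha> \<beta> A B" and ?Q = "Q_MGSSP \<alpha> \<beta> A B" and ?N = "m+n"
  obtain Pi where Pi: "mat_inverse ?P = Some Pi" "?P * Pi = 1\<^sub>m ?N" "Pi \<in> carrier_mat ?N ?N"
    using P_inverse[OF A pd ab B] by blast
  have Pc: "?P \<in> carrier_mat ?N ?N" and Qc: "?Q \<in> carrier_mat ?N ?N"
    using P_carrier[OF A B] Q_carrier[OF A B] .
  have T: "T_MGSSP \<alpha> \<beta> A B = Pi * ?Q" unfolding T_MGSSP_def Pi(1) by simp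
  let ?Tc = "map_mat complex_of_real (Pi * ?Q)"
  let ?Pc = "map_mat complex_of_real ?P" and ?Qc = "map_mat complex_of_real ?Q"
    and ?Pic = "map_mat complex_of_real Pi"
  have Tc: "?Tc = ?Pic * ?Qc" by (rule of_real_hom.mat_hom_mult[OF Pi(3) Qc])
  have "?Pc * ?Pic = map_mat complex_of_real (?P * Pi)"
    by (rule of_real_hom.mat_hom_mult[OF Pc Pi(3), symmetric])
  also have "\<dots> = 1\<^sub>m ?N" unfolding Pi(2) by (rule of_real_hom.mat_hom_one)
  finally have PPi: "?Pc * ?Pic = 1\<^sub>m ?N" .
  have TcC: "?Tc \<in> carrier_mat ?N ?N" using Pi(3) Qc by simp
  have bound: "cmod l < 1" if l: "l \<in> spectrum ?Tc" "l \<noteq> 1" for l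
  proof -
    obtain x where ev: "eigenvector ?Tc x l" using l(1) unfolding spectrum_def eigenvalue_def by auto
    have x: "x \<in> carrier_vec ?N" "x \<noteq> 0\<^sub>v ?N" "?Tc *\<^sub>v x = l \<cdot>\<^sub>v x"
      using ev TcC unfolding eigenvector_def by auto
    have PcC: "?Pc \<in> carrier_mat ?N ?N" and QcC: "?Qc \<in> carrier_mat ?N ?N"
      and PicC: "?Pic \<in> carrier_mat ?N ?N" using Pc Qc Pi(3) by auto
    have "?Qc *\<^sub>v x = (?Pc * ?Pic * ?Qc) *\<^sub>v x" using PPi QcC by simp
    also have "\<dots> = (?Pc * (?Pic * ?Qc)) *\<^sub>v x" by (simp only: assoc_mult_mat[OF PcC PicC QcC])
    also have "\<dots> = ?Pc *\<^sub>v (?Tc *\<^sub>v x)" unfolding Tc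
      by (rule assoc_mult_mat_vec[OF PcC mult_carrier_mat[OF PicC QcC] x(1)])
    also have "\<dots> = l \<cdot>\<^sub>v (?Pc *\<^sub>v x)" unfolding x(3) by (rule mult_mat_vec[OF PcC x(1)])
    finally have eq: "?Qc *\<^sub>v x = l \<cdot>\<^sub>v (?Pc *\<^sub>v x)" .
    define z1 where "z1 = (\<Sum>i<?N. cnj (x$i) * (?Qc *\<^sub>v x)$i)"
    define z2 where "z2 = (\<Sum>i<?N. cnj (x$i) * (?Pc *\<^sub>v x)$i)"
    have "z1 = (\<Sum>i<?N. l * (cnj (x$i) * (?Pc *\<^sub>v x)$i))" unfolding z1_def eq
      using PcC x(1) by (intro sum.cong refl) (simp add: mult.left_commute)
    hence z12: "z1 = l * z2" unfolding z2_def by (simp add: sum_distrib_left)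
    define R where "R = qf ?N x (Dm m \<alpha> \<beta>)"
    define a where "a = qf ?N x (KA m A)"
    define s where "s = qf ?N x (KB m B)"
    note kf = key_facts[OF A pd ab x(1,2), folded R_def a_def]
    have z1e: "z1 = R + a + s" unfolding z1_def R_def a_def s_def by (rule qf_Q[OF A B x(1)])
    have z2e: "z2 = R + 2 * a + 2 * s" unfolding z2_def R_def a_def s_def by (rule qf_P[OF A B x(1)])
    have sr: "Re s = 0" unfolding s_def by (rule qf_KB_re)
    show ?thesis
    proof (cases "Re a = 0")
      case True
      hence z: "\<forall>i<m. x$i = 0" using kf(4) by simp
      have "a = 0" "s = 0" unfolding a_def s_def using qf_zero_first[OF z] by auto
      hence "z1 = R" "z2 = R" using z1e z2e by auto
      moreover have "R \<noteq> 0" using kf(5)[OF z] by auto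
      ultimately have "l = 1" using z12 by simp
      with l(2) show ?thesis by simp
    next
      case False
      hence ap: "Re a > 0" using kf(3) by simp
      have R0: "Re R \<ge> 0" "Im R = 0" using kf(1,2) by auto
      define q where "q = Im a + Im s"
      have "Re z2 = Re R + 2 * Re a" "Im z2 = 2 * q" using z2e sr R0 by (auto simp: q_def)
      have "Re z1 = Re R + Re a" "Im z1 = q" using z1e sr R0 by (auto simp: q_def)
      have n1: "(cmod z1)^2 = (Re R + Re a)^2 + q^2"
        using \<open>Re z1 = _\<close> \<open>Im z1 = q\<close> by (simp add: cmod_power2)
      have n2: "(cmod z2)^2 = (Re R + 2 * Re a)^2 + (2*q)^2"
        using \<open>Re z2 = _\<close> \<open>Im z2 = _\<close> by (simp add: cmod_power2)
      have d: "(Re R + 2 * Re a)^2 + (2*q)^2 - ((Re R + Re a)^2 + q^2) = 2 * (Re R * Re a) + 3 * (Re a * Re a) + 3 * (q * q)"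
        by (simp add: power2_eq_square algebra_simps)
      have p1: "Re R * Re a \<ge> 0" using R0(1) ap by simp
      have p2: "Re a * Re a > 0" using ap by simp
      have p3: "q * q \<ge> 0" by simp
      have "(cmod z1)^2 < (cmod z2)^2" unfolding n1 n2 using d p1 p2 p3 by linarith
      hence lt: "cmod z1 < cmod z2" by (rule power_less_imp_less_base[OF _ norm_ge_zero])
      have "cmod z1 = cmod l * cmod z2" using z12 by (simp add: norm_mult)
      with lt have "cmod l * cmod z2 < 1 * cmod z2" by simp
      thus ?thesis by (rule mult_right_less_imp_less[OF _ norm_ge_zero])
    qed
  qed
  let ?S = "{0} \<union> cmod ` (spectrum ?Tc - {1})"
  have fin: "finite ?S" using card_finite_spectrum(1)[OF TcC] by simp
  have "Sup ?S = Max ?S" by (rule cSup_eq_Max[OF fin]) simp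
  also have "Max ?S < 1"
  proof (subst Max_less_iff[OF fin])
    show "?S \<noteq> {}" by simp
    show "\<forall>a\<in>?S. a < 1" using bound by auto
  qed
  finally show ?thesis unfolding pseudo_spectral_radius_def T by simp
qed

end
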